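(* Let $X$ be a compact subset of $\mathbb{R}^n_\infty$. Then for every $X$-surrounding point $p$, the function $d_\infty^X(p,\cdot)=d_\infty(p,\cdot)|_X$ is minimal, i.e. $\iota_X(\mathcal{F}(X))\subseteq\mathbf{E}(X)$, where $\iota_X(z)=d_\infty^X(z,\cdot)$. In addition, the map $\iota_X:\mathcal{F}(X)\to\mathbf{E}(X)$ preserves distances; thus $\mathcal{F}(X)$ isometrically embeds into $\mathbf{E}(X)$.
   Context: $\mathbb{R}^n_\infty$ is $\mathbb{R}^n$ with the $\ell^\infty$-metric $d_\infty$. For $1\le i\le n$, $\Lambda_i=\{x:x_i=\|x\|_\infty\}$ and $p+\xi\Lambda_i=\{p+\xi z:z\in\Lambda_i\}$ for $\xi\in\{\pm1\}$. A point $p$ is $X$-surrounding if $(p+\xi\Lambda_i)\cap X\ne\emptyset$ for all $i$ and $\xi$; $\mathcal{F}(X)$ is the set of such points with metric $d_\infty$. $\Delta(X)=\{f:X\to\mathbb{R}\text{ bounded}:f(x)+f(x')\ge d_\infty(x,x')\}$, a function in $\Delta(X)$ is minimal if no other element of $\Delta(X)$ lies pointwise below it, and the tight span $\mathbf{E}(X)$ is the set of minimal elements with the sup-norm metric. *)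

theory Defs
  imports "HOL-Analysis.Analysis"
begin

definition linf_norm :: "real ^ 'n \<Rightarrow> real" where
  "linf_norm x = Max (range (\<lambda>i. \<bar>x $ i\<bar>))"

definition dinf :: "real ^ 'n \<Rightarrow> real ^ 'n \<Rightarrow> real" where
  "dinf x y = linf_norm (x - y)"

definition Lambda_cone :: "'n \<Rightarrow> (real ^ 'n) set" where
  "Lambda_cone i = {x. x $ i = linf_norm x}"

definition shifted_cone :: "real ^ 'n \<Rightarrow> real \<Rightarrow> 'n \<Rightarrow> (real ^ 'n) set" where
  "shifted_cone p \<xi> i = {p + \<xi> *\<^sub>R z | z. z \<in> Lambda_cone i}"

definition surrounding :: "(real ^ 'n) set \<Rightarrow> real ^ 'n \<Rightarrow> bool" where
  "surrounding X p \<longleftrightarrow> (\<forall>i. \<forall>\<xi>\<in>{1, -1}. shifted_cone p \<xi> i \<inter> X \<noteq> {})"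

definition F_set :: "(real ^ 'n) set \<Rightarrow> (real ^ 'n) set" where
  "F_set X = {p. surrounding X p}"

text \<open>Delta(X): bounded functions on X (values outside X are irrelevant).\<close>
definition Delta :: "(real ^ 'n) set \<Rightarrow> (real ^ 'n \<Rightarrow> real) set" where
  "Delta X = {f. (\<exists>B. \<forall>x\<in>X. \<bar>f x\<bar> \<le> B) \<and>
                 (\<forall>x\<in>X. \<forall>x'\<in>X. f x + f x' \<ge> dinf x x')}"

definition minimal_in_Delta :: "(real ^ 'n) set \<Rightarrow> (real ^ 'n \<Rightarrow> real) \<Rightarrow> bool" where
  "minimal_in_Delta X f \<longleftrightarrow> f \<in> Delta X \<and>
     (\<forall>g\<in>Delta X. (\<forall>x\<in>X. g x \<le> f x) \<longrightarrow> (\<forall>x\<in>X. g x = f x))"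

definition tight_span :: "(real ^ 'n) set \<Rightarrow> (real ^ 'n \<Rightarrow> real) set" where
  "tight_span X = {f. minimal_in_Delta X f}"

definition sup_dist :: "(real ^ 'n) set \<Rightarrow> (real ^ 'n \<Rightarrow> real) \<Rightarrow> (real ^ 'n \<Rightarrow> real) \<Rightarrow> real" where
  "sup_dist X f g = (SUP x\<in>X. \<bar>f x - g x\<bar>)"

definition iota :: "(real ^ 'n) set \<Rightarrow> real ^ 'n \<Rightarrow> (real ^ 'n \<Rightarrow> real)" where
  "iota X z = (\<lambda>x. if x \<in> X then dinf z x else 0)"

end

theory Submission
  imports Defs
begin

lemma lin_ge: "\<bar>x $ i\<bar> \<le> linf_norm x"
  unfolding linf_norm_def by (rule Max_ge) auto

lemma lin_ex: "\<exists>i. linf_norm x = \<bar>x $ i\<bar>"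
proof -
  have "linf_norm x \<in> range (\<lambda>i. \<bar>x $ i\<bar>)"
    unfolding linf_norm_def by (rule Max_in) auto
  then show ?thesis by auto
qed

lemma lin_le: "(\<And>i. \<bar>x $ i\<bar> \<le> c) \<Longrightarrow> linf_norm x \<le> c"
  using lin_ex by metis

lemma lin_norm: "linf_norm x \<le> norm x"
  by (rule lin_le) (rule component_le_norm_cart)

lemma lin_neg: "linf_norm (- x) = linf_norm x"
proof -
  have "linf_norm (- x) \<le> linf_norm x" by (rule lin_le) (use lin_ge in auto)
  moreover have "linf_norm x \<le> linf_norm (- x)" by (rule lin_le) (metis lin_ge abs_minus_cancel vector_uminus_component)
  ultimately show ?thesis by simp
qed

lemma lin_tri: "linf_norm (x + y) \<le> linf_norm x + linf_norm y"
proof (rule lin_le)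
  fix i
  have "\<bar>(x + y) $ i\<bar> \<le> \<bar>x $ i\<bar> + \<bar>y $ i\<bar>" by simp
  also have "\<dots> \<le> linf_norm x + linf_norm y" using lin_ge add_mono by blast
  finally show "\<bar>(x + y) $ i\<bar> \<le> linf_norm x + linf_norm y" .
qed

lemma dinf_sym: "dinf x y = dinf y x"
  unfolding dinf_def by (metis lin_neg minus_diff_eq)

lemma dinf_tri: "dinf x z \<le> dinf x y + dinf y z"
  unfolding dinf_def using lin_tri[of "x - y" "y - z"] by simp

lemma dinf_ge: "\<bar>x $ i - y $ i\<bar> \<le> dinf x y"
  unfolding dinf_def using lin_ge[of "x - y" i] by simp

lemma far:
  assumes "y \<in> shifted_cone p \<xi> i" "\<xi> \<in> {1, -1}" "\<xi> * (p $ i - x $ i) \<ge> 0"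
  shows "dinf x y \<ge> \<bar>p $ i - x $ i\<bar> + dinf p y"
proof -
  obtain z where y: "y = p + \<xi> *\<^sub>R z" and z: "z $ i = linf_norm z"
    using assms(1) unfolding shifted_cone_def Lambda_cone_def by auto
  have z0: "z $ i \<ge> 0" using z lin_ge[of z i] by linarith
  have dp: "dinf p y = z $ i"
    using assms(2) unfolding dinf_def y z by (auto simp: lin_neg)
  have "\<bar>x $ i - y $ i\<bar> \<le> dinf x y" by (rule dinf_ge)
  moreover have "\<bar>x $ i - y $ i\<bar> = \<bar>p $ i - x $ i\<bar> + z $ i"
    using assms(2,3) z0 unfolding y by auto
  ultimately show ?thesis using dp by simp
qed

lemma pick:
  assumes "surrounding X p"
  shows "\<exists>y\<in>X. dinf x y \<ge> \<bar>p $ i - x $ i\<bar> + dinf p y"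
proof -
  define \<xi> :: real where "\<xi> = (if p $ i - x $ i \<ge> 0 then 1 else -1)"
  have xi: "\<xi> \<in> {1, -1}" unfolding \<xi>_def by auto
  have s: "\<xi> * (p $ i - x $ i) \<ge> 0" unfolding \<xi>_def by auto
  obtain y where "y \<in> shifted_cone p \<xi> i" "y \<in> X"
    using assms xi unfolding surrounding_def by blast
  then show ?thesis using far[OF _ xi s] by blast
qed

theorem proposition5p4:
  fixes X :: "(real ^ 'n) set"
  assumes "compact X"
  shows "iota X ` F_set X \<subseteq> tight_span X \<and>
         (\<forall>p\<in>F_set X. \<forall>q\<in>F_set X. sup_dist X (iota X p) (iota X q) = dinf p q)"
proof (intro conjI ballI subsetI)
  fix f assume "f \<in> iota X ` F_set X"
  then obtain p where p: "surrounding X p" and f: "f = iota X p"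
    unfolding F_set_def by auto
  have fx: "\<And>x. x \<in> X \<Longrightarrow> f x = dinf p x" unfolding f iota_def by simp
  obtain M where M: "\<And>x. x \<in> X \<Longrightarrow> norm x \<le> M"
    using compact_imp_bounded[OF assms] unfolding bounded_iff by blast
  have fD: "f \<in> Delta X"
    unfolding Delta_def
  proof (intro CollectI conjI exI ballI)
    fix x assume x: "x \<in> X"
    have "dinf p x \<le> norm (p - x)" unfolding dinf_def by (rule lin_norm)
    also have "\<dots> \<le> norm p + norm x" by (rule norm_triangle_ineq4)
    finally have "dinf p x \<le> norm p + M" using M[OF x] by simp
    moreover have "dinf p x \<ge> 0" using dinf_ge[of p _ x] by (meson abs_ge_zero order_trans)
    ultimately show "\<bar>f x\<bar> \<le> norm p + M" using fx[OF x] by simp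
  next
    fix x x' assume "x \<in> X" "x' \<in> X"
    then show "f x + f x' \<ge> dinf x x'" using fx dinf_tri[where x=x and y=p and z=x'] dinf_sym[of x p] by simp
  qed
  have "minimal_in_Delta X f"
    unfolding minimal_in_Delta_def
  proof (intro conjI fD ballI impI)
    fix g x assume g: "g \<in> Delta X" and le: "\<forall>x\<in>X. g x \<le> f x" and x: "x \<in> X"
    obtain i where i: "linf_norm (p - x) = \<bar>(p - x) $ i\<bar>" using lin_ex by blast
    obtain y where y: "y \<in> X" "dinf x y \<ge> \<bar>p $ i - x $ i\<bar> + dinf p y"
      using pick[OF p] by blast
    have "g x + g y \<ge> dinf x y" using g x y(1) unfolding Delta_def by auto
    moreover have "g y \<le> dinf p y" using le y(1) fx by auto
    moreover have "dinf p x = \<bar>p $ i - x $ i\<bar>" using i unfolding dinf_def by simp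
    ultimately have "g x \<ge> f x" using y fx[OF x] by linarith
    then show "g x = f x" using le x by force
  qed
  then show "f \<in> tight_span X" unfolding tight_span_def by simp
next
  fix p q assume "p \<in> F_set X" "q \<in> F_set X"
  then have p: "surrounding X p" unfolding F_set_def by simp
  obtain i where i: "linf_norm (p - q) = \<bar>(p - q) $ i\<bar>" using lin_ex by blast
  obtain y where y: "y \<in> X" "dinf q y \<ge> \<bar>p $ i - q $ i\<bar> + dinf p y"
    using pick[OF p] by blast
  have pq: "dinf p q = \<bar>p $ i - q $ i\<bar>" using i unfolding dinf_def by simp
  have "Sup ((\<lambda>x. \<bar>iota X p x - iota X q x\<bar>) ` X) = dinf p q"
  proof (rule cSup_eq_maximum)
    show "dinf p q \<in> (\<lambda>x. \<bar>iota X p x - iota X q x\<bar>) ` X"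
    proof
      show "dinf p q = \<bar>iota X p y - iota X q y\<bar>"
        using y pq dinf_tri[where x=q and y=p and z=y] dinf_sym[of p q] unfolding iota_def by auto
    qed (rule y(1))
  next
    fix r assume "r \<in> (\<lambda>x. \<bar>iota X p x - iota X q x\<bar>) ` X"
    then obtain x where "x \<in> X" "r = \<bar>dinf p x - dinf q x\<bar>" unfolding iota_def by auto
    then show "r \<le> dinf p q" using dinf_tri[where x=p and y=q and z=x] dinf_tri[where x=q and y=p and z=x] dinf_sym[of p q] by auto
  qed
  then show "sup_dist X (iota X p) (iota X q) = dinf p q" unfolding sup_dist_def by simp
qed

end
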